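(* Let $H$ be the orthocenter of $T=P_1P_2P_3$. (i) For each $i$, the line $P_iP_i''$ is the altitude of $T$ from $P_i$; in particular the three lines $P_iP_i''$ concur at $H$, so $T$ and $T''=P_1''P_2''P_3''$ are perspective with perspector $H$, and the perpendiculars from $P_i''$ to the side of $T$ opposite $P_i$ all pass through $H$. (ii) For each $i$, with $\{i,j,k\}=\{1,2,3\}$, the perpendicular from $P_i$ to the line $P_j''P_k''$ passes through $-M$ (the reflection of $M$ in $O$). Hence $T$ and $T''$ are orthologic with orthology centers $H$ and $-M$.
   Context: Let $a>b>0$ and $c>0$ with $c^2=a^2-b^2$. Let $\mathcal{E}$ be the ellipse $x^2/a^2+y^2/b^2=1$ with center $O=(0,0)$, parametrized by $P(t)=(a\cos t,b\sin t)$. Fix $u\in\mathbb{R}$ and let $M=(a\cos u,b\sin u)$. For $i=1,2,3$ let $t_i=-u/3-2\pi(i-1)/3$, $P_i=P(t_i)$, and $P_i''=\left(\frac{c^2\cos^3 t_i}{a},-\frac{c^2\sin^3 t_i}{b}\right)$ (the center of curvature of $\mathcal{E}$ at $P_i$). Two triangles $ABC$, $DEF$ are orthologic if the perpendiculars from $A,B,C$ to $EF,FD,DE$ respectively are concurrent; the concurrence points of these perpendiculars and of the perpendiculars from $D,E,F$ to $BC,CA,AB$ are the orthology centers. *)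

theory Defs
  imports Complex_Main
begin

type_synonym pt = "real \<times> real"

definition dotp :: "pt \<Rightarrow> pt \<Rightarrow> real" where
  "dotp p q = fst p * fst q + snd p * snd q"

definition vsub :: "pt \<Rightarrow> pt \<Rightarrow> pt" where
  "vsub p q = (fst p - fst q, snd p - snd q)"

definition neg_pt :: "pt \<Rightarrow> pt" where
  "neg_pt p = (- fst p, - snd p)"

definition on_line :: "pt \<Rightarrow> pt \<Rightarrow> pt \<Rightarrow> bool" where
  "on_line X A B \<longleftrightarrow> A \<noteq> B \<and>
     (fst B - fst A) * (snd X - snd A) - (snd B - snd A) * (fst X - fst A) = 0"

definition on_perp :: "pt \<Rightarrow> pt \<Rightarrow> pt \<Rightarrow> pt \<Rightarrow> bool" where
  "on_perp X A B C \<longleftrightarrow> B \<noteq> C \<and> dotp (vsub X A) (vsub C B) = 0"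

definition collinear3 :: "pt \<Rightarrow> pt \<Rightarrow> pt \<Rightarrow> bool" where
  "collinear3 A B C \<longleftrightarrow>
     (fst B - fst A) * (snd C - snd A) - (snd B - snd A) * (fst C - fst A) = 0"

definition orthocenter :: "pt \<Rightarrow> pt \<Rightarrow> pt \<Rightarrow> pt" where
  "orthocenter A B C = (THE H. on_perp H A B C \<and> on_perp H B C A \<and> on_perp H C A B)"

definition orthology_center :: "pt \<Rightarrow> pt \<Rightarrow> pt \<Rightarrow> pt \<Rightarrow> pt \<Rightarrow> pt \<Rightarrow> pt \<Rightarrow> bool" where
  "orthology_center A B C D E F Z \<longleftrightarrow> on_perp Z A E F \<and> on_perp Z B F D \<and> on_perp Z C D E"

definition orthologic :: "pt \<Rightarrow> pt \<Rightarrow> pt \<Rightarrow> pt \<Rightarrow> pt \<Rightarrow> pt \<Rightarrow> bool" where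
  "orthologic A B C D E F \<longleftrightarrow> (\<exists>Z. orthology_center A B C D E F Z)"

definition perspector :: "pt \<Rightarrow> pt \<Rightarrow> pt \<Rightarrow> pt \<Rightarrow> pt \<Rightarrow> pt \<Rightarrow> pt \<Rightarrow> bool" where
  "perspector A B C D E F Z \<longleftrightarrow> on_line Z A D \<and> on_line Z B E \<and> on_line Z C F"

end

theory Submission
  imports Defs
begin

lemma sin_treble: "sin (3 * x) = 3 * sin x - 4 * sin x ^ 3" for x :: real
proof -
  have "sin (3*x) = sin (2*x + x)" by (rule arg_cong[where f=sin]) simp
  also have "\<dots> = sin (2*x) * cos x + cos (2*x) * sin x" by (rule sin_add)
  also have "\<dots> = 2 * sin x * cos x ^ 2 + (1 - 2 * sin x ^ 2) * sin x"
    by (simp add: sin_double cos_double_sin power2_eq_square)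
  also have "\<dots> = 3 * sin x - 4 * sin x ^ 3"
    unfolding cos_squared_eq by (simp add: algebra_simps power2_eq_square power3_eq_cube)
  finally show ?thesis .
qed

lemma rot3:
  fixes r c s c' s' c'' s'' :: real
  assumes "r^2 = 3" "c' = -c/2 + r/2*s" "s' = -s/2 - r/2*c"
    "c'' = -c'/2 + r/2*s'" "s'' = -s'/2 - r/2*c'"
  shows "c'' - c' = -r*s \<and> s'' - s' = r*c \<and> c + c' + c'' = 0 \<and> s + s' + s'' = 0"
proof -
  have r2: "r*r = 3" using assms(1) by (simp add: power2_eq_square)
  have "c'' = -(-c/2 + r/2*s)/2 + r/2*(-s/2 - r/2*c)" using assms(2-5) by simp
  also have "\<dots> = c/4 - r*s/4 - r/4*s - (r*r)/4*c" by (simp add: field_simps)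
  finally have "c'' = c/4 - r*s/4 - r/4*s - (r*r)/4*c" .
  then have e1: "c'' = -c/2 - r/2*s" using r2 by (simp add: field_simps)
  have "s'' = -(-s/2 - r/2*c)/2 - r/2*(-c/2 + r/2*s)" using assms(2-5) by simp
  also have "\<dots> = s/4 + r*c/4 + r/4*c - (r*r)/4*s" by (simp add: field_simps)
  finally have "s'' = s/4 + r*c/4 + r/4*c - (r*r)/4*s" .
  then have e2: "s'' = -s/2 + r/2*c" using r2 by (simp add: field_simps)
  show ?thesis using e1 e2 assms(2,3) by (simp add: field_simps)
qed

lemma coreA:
  fixes a b c r ci si cj sj ck sk :: real
  assumes "a \<noteq> 0" "b \<noteq> 0" "c^2 = a^2 - b^2" "ci^2 + si^2 = 1"
    "ck - cj = -r*si" "sk - sj = r*ci"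
  shows "dotp (vsub (c^2*ci^3/a, -(c^2*si^3/b)) (a*ci, b*si)) (vsub (a*ck, b*sk) (a*cj, b*sj)) = 0"
proof -
  have "dotp (vsub (c^2*ci^3/a, -(c^2*si^3/b)) (a*ci, b*si)) (vsub (a*ck, b*sk) (a*cj, b*sj))
      = (c^2*ci^3 - a^2*ci) * (ck - cj) + (-(c^2*si^3) - b^2*si) * (sk - sj)"
    using assms(1,2) by (simp add: dotp_def vsub_def field_simps power2_eq_square)
  also have "\<dots> = (c^2*ci^3 - a^2*ci) * (-r*si) + (-(c^2*si^3) - b^2*si) * (r*ci)"
    using assms(5,6) by simp
  also have "\<dots> = -r*ci*si*(c^2*(ci^2+si^2) - a^2 + b^2)"
    by (simp add: algebra_simps power2_eq_square power3_eq_cube)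
  also have "\<dots> = 0" using assms(3,4) by simp
  finally show ?thesis .
qed

lemma coreB:
  fixes a b c r ci si cj sj ck sk cu su :: real
  assumes "a \<noteq> 0" "b \<noteq> 0" "r^2 = 3" "ci^2 + si^2 = 1"
    "ck - cj = -r*si" "sk - sj = r*ci" "ci + cj + ck = 0" "si + sj + sk = 0"
    "cu = 4*ci^3 - 3*ci" "su = 4*si^3 - 3*si"
  shows "dotp (vsub (neg_pt (a*cu, b*su)) (a*ci, b*si))
     (vsub (c^2*ck^3/a, -(c^2*sk^3/b)) (c^2*cj^3/a, -(c^2*sj^3/b))) = 0"
proof -
  have h1: "ck^3 - cj^3 = -3*r*si/4"
  proof -
    have "ck^3 - cj^3 = (ck-cj)*(3*(ck+cj)^2 + (ck-cj)^2)/4"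
      by (simp add: algebra_simps power2_eq_square power3_eq_cube)
    also have "ck + cj = -ci" using assms(7) by linarith
    also have "(-ci)^2 = ci^2" by simp
    also have "(ck - cj) = -r*si" by (rule assms(5))
    also have "(-r*si)^2 = r^2*si^2" by (simp add: power_mult_distrib)
    also have "r^2 = 3" by (rule assms(3))
    also have "3*ci^2 + 3*si^2 = 3*(ci^2+si^2)" by simp
    also have "ci^2+si^2 = 1" by (rule assms(4))
    finally show ?thesis by simp
  qed
  have h2: "sk^3 - sj^3 = 3*r*ci/4"
  proof -
    have "sk^3 - sj^3 = (sk-sj)*(3*(sk+sj)^2 + (sk-sj)^2)/4"
      by (simp add: algebra_simps power2_eq_square power3_eq_cube)
    also have "sk + sj = -si" using assms(8) by linarith
    also have "(-si)^2 = si^2" by simp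
    also have "(sk - sj) = r*ci" by (rule assms(6))
    also have "(r*ci)^2 = r^2*ci^2" by (simp add: power_mult_distrib)
    also have "r^2 = 3" by (rule assms(3))
    also have "3*si^2 + 3*ci^2 = 3*(ci^2+si^2)" by simp
    also have "ci^2+si^2 = 1" by (rule assms(4))
    finally show ?thesis by simp
  qed
  have "dotp (vsub (neg_pt (a*cu, b*su)) (a*ci, b*si))
     (vsub (c^2*ck^3/a, -(c^2*sk^3/b)) (c^2*cj^3/a, -(c^2*sj^3/b)))
     = (- (c^2)) * (cu + ci) * (ck^3 - cj^3) + c^2 * (su + si) * (sk^3 - sj^3)"
    using assms(1,2) by (simp add: dotp_def vsub_def neg_pt_def field_simps)
  also have "\<dots> = (3*r*c^2/4) * ((cu + ci)*si + (su+si)*ci)"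
    unfolding h1 h2 by (simp add: algebra_simps)
  also have "(cu + ci)*si + (su+si)*ci = 4*ci*si*(ci^2+si^2-1)"
    unfolding assms(9,10) by (simp add: algebra_simps power2_eq_square power3_eq_cube)
  also have "ci^2+si^2-1 = 0" using assms(4) by simp
  finally show ?thesis by simp
qed

lemma cube_inj: "(x::real)^3 = y^3 \<Longrightarrow> x = y"
  by (metis odd_numeral odd_real_root_unique)

lemma on_perp_swap: "on_perp X A B C \<longleftrightarrow> on_perp X A C B"
proof -
  have "dotp (vsub X A) (vsub B C) = - dotp (vsub X A) (vsub C B)"
    by (simp add: dotp_def vsub_def algebra_simps)
  then show ?thesis unfolding on_perp_def by auto
qed

lemma perp2d:
  fixes n1 n2 d1 d2 x1 x2 :: real
  assumes "(n1, n2) \<noteq> (0, 0)" "(d1, d2) \<noteq> (0, 0)" "n1*d1 + n2*d2 = 0"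
  shows "n1*x2 - n2*x1 = 0 \<longleftrightarrow> x1*d1 + x2*d2 = 0"
proof -
  have id1: "(n1^2 + n2^2) * (x1*d1 + x2*d2) = (n1*d2 - n2*d1)*(n1*x2 - n2*x1) + (n1*d1+n2*d2)*(n1*x1+n2*x2)"
    by (simp add: algebra_simps power2_eq_square)
  have id2: "(n1*d2 - n2*d1)^2 + (n1*d1+n2*d2)^2 = (n1^2+n2^2)*(d1^2+d2^2)"
    by (simp add: algebra_simps power2_eq_square)
  have nn: "n1^2 + n2^2 \<noteq> 0" using assms(1) by (simp add: sum_power2_eq_zero_iff)
  have dd: "d1^2 + d2^2 \<noteq> 0" using assms(2) by (simp add: sum_power2_eq_zero_iff)
  have k: "n1*d2 - n2*d1 \<noteq> 0"
  proof
    assume "n1*d2 - n2*d1 = 0"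
    then have "(n1^2+n2^2)*(d1^2+d2^2) = 0" using id2 assms(3) by simp
    then show False using nn dd by auto
  qed
  have "x1*d1 + x2*d2 = 0 \<longleftrightarrow> (n1^2 + n2^2) * (x1*d1 + x2*d2) = 0" using nn by auto
  also have "\<dots> \<longleftrightarrow> (n1*d2 - n2*d1)*(n1*x2 - n2*x1) = 0" using id1 assms(3) by simp
  also have "\<dots> \<longleftrightarrow> n1*x2 - n2*x1 = 0" using k by simp
  finally show ?thesis by simp
qed

lemma line_perp:
  assumes "A \<noteq> B" "C \<noteq> D" "dotp (vsub B A) (vsub D C) = 0"
  shows "on_line X A B \<longleftrightarrow> on_perp X A C D"
proof -
  have n: "(fst B - fst A, snd B - snd A) \<noteq> (0, 0)" using assms(1) by (auto simp: prod_eq_iff)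
  have d: "(fst D - fst C, snd D - snd C) \<noteq> (0, 0)" using assms(2) by (auto simp: prod_eq_iff)
  have e: "(fst B - fst A)*(fst D - fst C) + (snd B - snd A)*(snd D - snd C) = 0"
    using assms(3) by (simp add: dotp_def vsub_def)
  show ?thesis
    using perp2d[OF n d e, of "snd X - snd A" "fst X - fst A"] assms(1,2)
    by (simp add: on_line_def on_perp_def dotp_def vsub_def)
qed

lemma orthoc:
  assumes "\<not> collinear3 A B C"
  shows "on_perp (orthocenter A B C) A B C \<and> on_perp (orthocenter A B C) B C A \<and> on_perp (orthocenter A B C) C A B"
proof -
  obtain a1 a2 where A: "A = (a1, a2)" by (cases A)
  obtain b1 b2 where B: "B = (b1, b2)" by (cases B)
  obtain c1 c2 where C: "C = (c1, c2)" by (cases C)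
  define v1 where "v1 = c1 - b1"
  define v2 where "v2 = c2 - b2"
  define w1 where "w1 = a1 - c1"
  define w2 where "w2 = a2 - c2"
  define D where "D = v1*w2 - v2*w1"
  have "D = (b1-a1)*(c2-a2) - (b2-a2)*(c1-a1)" unfolding D_def v1_def v2_def w1_def w2_def
    by (simp add: algebra_simps)
  then have D0: "D \<noteq> 0" using assms A B C by (simp add: collinear3_def)
  have neq: "A \<noteq> B" "B \<noteq> C" "C \<noteq> A" using assms by (auto simp: collinear3_def)
  have p1: "on_perp X A B C \<longleftrightarrow> v1*(fst X - a1) + v2*(snd X - a2) = 0" for X
    using neq A B C by (simp add: on_perp_def dotp_def vsub_def v1_def v2_def algebra_simps)
  have p2: "on_perp X B C A \<longleftrightarrow> w1*(fst X - b1) + w2*(snd X - b2) = 0" for X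
    using neq A B C by (simp add: on_perp_def dotp_def vsub_def w1_def w2_def algebra_simps)
  have p3: "on_perp X C A B \<longleftrightarrow> (b1-a1)*(fst X - c1) + (b2-a2)*(snd X - c2) = 0" for X
    using neq A B C by (simp add: on_perp_def dotp_def vsub_def algebra_simps)
  have sum3: "v1*(x - a1) + v2*(y - a2) + (w1*(x - b1) + w2*(y - b2)) + ((b1-a1)*(x - c1) + (b2-a2)*(y - c2)) = 0" for x y
    unfolding v1_def v2_def w1_def w2_def by (simp add: algebra_simps)
  define p where "p = v1*a1 + v2*a2"
  define q where "q = w1*b1 + w2*b2"
  define X0 where "X0 = ((p*w2 - q*v2)/D, (v1*q - w1*p)/D)"
  have e1: "v1*(fst X0 - a1) + v2*(snd X0 - a2) = 0"
  proof -
    have "v1*(fst X0) + v2*(snd X0) = (v1*(p*w2 - q*v2) + v2*(v1*q - w1*p))/D"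
      unfolding X0_def by (simp add: add_divide_distrib)
    also have "v1*(p*w2 - q*v2) + v2*(v1*q - w1*p) = p*D" by (simp add: D_def algebra_simps)
    finally have "v1*(fst X0) + v2*(snd X0) = p" using D0 by simp
    then show ?thesis unfolding p_def by (simp add: algebra_simps)
  qed
  have e2: "w1*(fst X0 - b1) + w2*(snd X0 - b2) = 0"
  proof -
    have "w1*(fst X0) + w2*(snd X0) = (w1*(p*w2 - q*v2) + w2*(v1*q - w1*p))/D"
      unfolding X0_def by (simp add: add_divide_distrib)
    also have "w1*(p*w2 - q*v2) + w2*(v1*q - w1*p) = q*D" by (simp add: D_def algebra_simps)
    finally have "w1*(fst X0) + w2*(snd X0) = q" using D0 by simp
    then show ?thesis unfolding q_def by (simp add: algebra_simps)
  qed
  have e3: "(b1-a1)*(fst X0 - c1) + (b2-a2)*(snd X0 - c2) = 0"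
    using sum3[of "fst X0" "snd X0"] e1 e2 by simp
  have ex1: "\<exists>!X. on_perp X A B C \<and> on_perp X B C A \<and> on_perp X C A B"
  proof (rule ex1I[of _ X0])
    show "on_perp X0 A B C \<and> on_perp X0 B C A \<and> on_perp X0 C A B" using e1 e2 e3 p1 p2 p3 by simp
  next
    fix Y assume "on_perp Y A B C \<and> on_perp Y B C A \<and> on_perp Y C A B"
    then have y1: "v1*(fst Y - a1) + v2*(snd Y - a2) = 0" and y2: "w1*(fst Y - b1) + w2*(snd Y - b2) = 0"
      using p1 p2 by auto
    have f1: "v1*(fst Y - fst X0) + v2*(snd Y - snd X0) = 0" using y1 e1 by (simp add: algebra_simps)
    have f2: "w1*(fst Y - fst X0) + w2*(snd Y - snd X0) = 0" using y2 e2 by (simp add: algebra_simps)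
    have "D*(fst Y - fst X0) = w2*(v1*(fst Y - fst X0) + v2*(snd Y - snd X0)) - v2*(w1*(fst Y - fst X0) + w2*(snd Y - snd X0))"
      unfolding D_def by (simp add: algebra_simps)
    then have g1: "fst Y = fst X0" using f1 f2 D0 by simp
    have "D*(snd Y - snd X0) = v1*(w1*(fst Y - fst X0) + w2*(snd Y - snd X0)) - w1*(v1*(fst Y - fst X0) + v2*(snd Y - snd X0))"
      unfolding D_def by (simp add: algebra_simps)
    then have g2: "snd Y = snd X0" using f1 f2 D0 by simp
    show "Y = X0" using g1 g2 by (simp add: prod_eq_iff)
  qed
  show ?thesis unfolding orthocenter_def by (rule theI'[OF ex1])
qed

lemma perm3:
  assumes "{i, j, k} = {1, 2, 3 :: nat}"
  shows "(i, j, k) \<in> {(1,2,3),(2,3,1),(3,1,2),(1,3,2),(2,1,3),(3,2,1)}"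
proof -
  have m: "i \<in> {1,2,3}" "j \<in> {1,2,3}" "k \<in> {1,2,3}" and n: "1 \<in> {i,j,k}" "2 \<in> {i,j,k}" "3 \<in> {i,j,k}"
    using assms by blast+
  from m have "i = 1 \<or> i = 2 \<or> i = 3" "j = 1 \<or> j = 2 \<or> j = 3" "k = 1 \<or> k = 2 \<or> k = 3" by simp_all
  then show ?thesis using n by (elim disjE) simp_all
qed

lemma perm3_reduce:
  assumes "\<And>i j k. (i, j, k) \<in> {(1,2,3),(2,3,1),(3,1,2::nat)} \<Longrightarrow> R i j k"
    and "\<And>i j k. R i j k \<Longrightarrow> R i k j"
    and "{i, j, k} = {1, 2, 3 :: nat}"
  shows "R i j k"
proof -
  have c1: "R 1 2 3" "R 2 3 1" "R 3 1 2" by (rule assms(1); simp)+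
  have c2: "R 1 3 2" "R 2 1 3" "R 3 2 1" by (rule assms(2), rule c1)+
  show ?thesis using perm3[OF assms(3)]
    by (elim insertE emptyE) (simp_all del: One_nat_def add: c1 c2)
qed

lemma PQ_ne:
  fixes a b c co si :: real
  assumes "co^2 + si^2 = 1" "b > 0" "a > b" "c^2 = a^2 - b^2"
  shows "(a*co, b*si) \<noteq> (c^2*co^3/a, -(c^2*si^3/b))"
proof
  assume h: "(a*co, b*si) = (c^2*co^3/a, -(c^2*si^3/b))"
  have a0: "a \<noteq> 0" using assms by simp
  have b0: "b \<noteq> 0" using assms by simp
  have h1: "a^2*co = c^2*co^3" using h a0 by (simp add: field_simps power2_eq_square power3_eq_cube)
  have h2: "si*(b^2 + c^2*si^2) = 0" using h b0 by (simp add: field_simps power2_eq_square power3_eq_cube)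
  have "b^2 + c^2*si^2 > 0" using assms(2) by (simp add: add_pos_nonneg)
  then have s0: "si = 0" using h2 by simp
  then have "co^2 = 1" using assms(1) by simp
  then have "co^3 = co" by (simp add: power3_eq_cube power2_eq_square)
  then have "(a^2 - c^2)*co = 0" using h1 by (simp add: algebra_simps)
  then have "b^2 * co = 0" using assms(4) by simp
  then have "co = 0" using b0 by simp
  then show False using \<open>co^2 = 1\<close> by simp
qed

lemma cos3_shift:
  fixes x u :: real
  assumes "3*x = -u - 2*pi*real n"
  shows "cos u = 4*cos x^3 - 3*cos x \<and> sin u = 4*sin x^3 - 3*sin x"
proof -
  have c: "cos (2*pi*real n) = 1" using cos_int_2pin[of "int n"] by simp
  have s: "sin (2*pi*real n) = 0" using sin_int_2pin[of "int n"] by simp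
  have "cos (3*x) = cos (-u - 2*pi*real n)" using assms by simp
  also have "\<dots> = cos (-u)*cos (2*pi*real n) + sin (-u)*sin (2*pi*real n)" by (rule cos_diff)
  finally have 1: "cos (3*x) = cos u" using c s by simp
  have "sin (3*x) = sin (-u - 2*pi*real n)" using assms by simp
  also have "\<dots> = sin (-u)*cos (2*pi*real n) - cos (-u)*sin (2*pi*real n)" by (rule sin_diff)
  finally have 2: "sin (3*x) = - sin u" using c s by simp
  show ?thesis using 1 2 by (simp add: cos_treble_cos sin_treble)
qed

theorem proposition8p3:
  fixes a b c u :: real and t :: "nat \<Rightarrow> real" and P Q :: "nat \<Rightarrow> pt" and M H :: pt
  assumes "a > b" "b > 0" "c > 0" "c ^ 2 = a ^ 2 - b ^ 2"
    and "M = (a * cos u, b * sin u)"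
    and "\<And>i. t i = - u / 3 - 2 * pi * (real i - 1) / 3"
    and "\<And>i. P i = (a * cos (t i), b * sin (t i))"
    and "\<And>i. Q i = (c ^ 2 * (cos (t i)) ^ 3 / a, - (c ^ 2 * (sin (t i)) ^ 3 / b))"
    and "H = orthocenter (P 1) (P 2) (P 3)"
  shows "\<not> collinear3 (P 1) (P 2) (P 3)
    \<and> (\<forall>i j k. {i, j, k} = {1, 2, 3 :: nat} \<longrightarrow>
          P i \<noteq> Q i \<and> (\<forall>X. on_line X (P i) (Q i) \<longleftrightarrow> on_perp X (P i) (P j) (P k)))
    \<and> on_perp H (P 1) (P 2) (P 3) \<and> on_perp H (P 2) (P 3) (P 1) \<and> on_perp H (P 3) (P 1) (P 2)
    \<and> perspector (P 1) (P 2) (P 3) (Q 1) (Q 2) (Q 3) H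
    \<and> (\<forall>i j k. {i, j, k} = {1, 2, 3 :: nat} \<longrightarrow> on_perp H (Q i) (P j) (P k))
    \<and> (\<forall>i j k. {i, j, k} = {1, 2, 3 :: nat} \<longrightarrow> on_perp (neg_pt M) (P i) (Q j) (Q k))
    \<and> orthologic (P 1) (P 2) (P 3) (Q 1) (Q 2) (Q 3)
    \<and> orthology_center (Q 1) (Q 2) (Q 3) (P 1) (P 2) (P 3) H
    \<and> orthology_center (P 1) (P 2) (P 3) (Q 1) (Q 2) (Q 3) (neg_pt M)"
proof -
  define r where "r = sqrt 3"
  have r2: "r^2 = 3" unfolding r_def by simp
  have a0: "a \<noteq> 0" and b0: "b \<noteq> 0" using assms(1,2) by auto
  have rot: "cos (y - 2*pi/3) = -cos y/2 + r/2*sin y \<and> sin (y - 2*pi/3) = -sin y/2 - r/2*cos y" for y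
    by (simp add: cos_diff sin_diff cos_120 sin_120 r_def)
  have t2: "t 2 = t 1 - 2*pi/3" using assms(6)[of 2] assms(6)[of 1] by simp
  have t3: "t 3 = t 2 - 2*pi/3" using assms(6)[of 3] assms(6)[of 2] by simp
  have t1: "t 1 = (t 3 - 2*pi/3) + 2*pi" using assms(6)[of 3] assms(6)[of 1] by simp
  have R12: "cos (t 2) = -cos (t 1)/2 + r/2*sin (t 1) \<and> sin (t 2) = -sin (t 1)/2 - r/2*cos (t 1)"
    using rot[of "t 1"] t2 by simp
  have R23: "cos (t 3) = -cos (t 2)/2 + r/2*sin (t 2) \<and> sin (t 3) = -sin (t 2)/2 - r/2*cos (t 2)"
    using rot[of "t 2"] t3 by simp
  have R31: "cos (t 1) = -cos (t 3)/2 + r/2*sin (t 3) \<and> sin (t 1) = -sin (t 3)/2 - r/2*cos (t 3)"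
  proof -
    have "cos (t 1) = cos (t 3 - 2*pi/3)" "sin (t 1) = sin (t 3 - 2*pi/3)"
      by (subst t1, simp only: cos_periodic sin_periodic)+
    then show ?thesis using rot[of "t 3"] by simp
  qed
  have U: "cos u = 4*cos (t i)^3 - 3*cos (t i) \<and> sin u = 4*sin (t i)^3 - 3*sin (t i)"
    if "i \<in> {1,2,3}" for i
  proof -
    define n where "n = i - 1"
    have n: "i = n + 1" using that unfolding n_def by auto
    have "3 * t i = -u - 2*pi*real n" using assms(6)[of i] n by (simp add: field_simps)
    then show ?thesis by (rule cos3_shift)
  qed
  have pyth: "cos (t i)^2 + sin (t i)^2 = 1" for i by simp
  have CYC: "cos (t k) - cos (t j) = -r * sin (t i) \<and> sin (t k) - sin (t j) = r * cos (t i)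
      \<and> cos (t i) + cos (t j) + cos (t k) = 0 \<and> sin (t i) + sin (t j) + sin (t k) = 0
      \<and> cos u = 4*cos (t i)^3 - 3*cos (t i) \<and> sin u = 4*sin (t i)^3 - 3*sin (t i)"
    if "(i, j, k) \<in> {(1,2,3),(2,3,1),(3,1,2::nat)}" for i j k
  proof -
    have i: "i \<in> {1,2,3}" using that by auto
    have "cos (t k) - cos (t j) = -r * sin (t i) \<and> sin (t k) - sin (t j) = r * cos (t i)
      \<and> cos (t i) + cos (t j) + cos (t k) = 0 \<and> sin (t i) + sin (t j) + sin (t k) = 0"
      using that
    proof (elim insertE emptyE)
      assume "(i,j,k) = (1,2,3)" then show ?thesis
        using rot3[OF r2, of "cos (t 2)" "cos (t 1)" "sin (t 1)" "sin (t 2)" "cos (t 3)" "sin (t 3)"] R12 R23 by simp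
    next
      assume "(i,j,k) = (2,3,1)" then show ?thesis
        using rot3[OF r2, of "cos (t 3)" "cos (t 2)" "sin (t 2)" "sin (t 3)" "cos (t 1)" "sin (t 1)"] R23 R31 by simp
    next
      assume "(i,j,k) = (3,1,2)" then show ?thesis
        using rot3[OF r2, of "cos (t 1)" "cos (t 3)" "sin (t 3)" "sin (t 1)" "cos (t 2)" "sin (t 2)"] R31 R12 by simp
    qed
    then show ?thesis using U[OF i] by simp
  qed
  have ncol: "\<not> collinear3 (P 1) (P 2) (P 3)"
  proof -
    have c1: "cos (t 2) - cos (t 1) = -r*sin (t 3) \<and> sin (t 2) - sin (t 1) = r*cos (t 3)"
      using CYC[of 3 1 2] by blast
    have c2: "cos (t 1) - cos (t 3) = -r*sin (t 2) \<and> sin (t 1) - sin (t 3) = r*cos (t 2)"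
      using CYC[of 2 3 1] by blast
    have "collinear3 (P 1) (P 2) (P 3) \<longleftrightarrow>
       (a*(cos (t 2) - cos (t 1)))*(b*(sin (t 3) - sin (t 1))) - (b*(sin (t 2) - sin (t 1)))*(a*(cos (t 3) - cos (t 1))) = 0"
      by (simp add: collinear3_def assms(7) algebra_simps)
    also have "(a*(cos (t 2) - cos (t 1)))*(b*(sin (t 3) - sin (t 1))) - (b*(sin (t 2) - sin (t 1)))*(a*(cos (t 3) - cos (t 1)))
        = a*b*r^2*(sin (t 3)*cos (t 2) - cos (t 3)*sin (t 2))"
    proof -
      have e1: "sin (t 3) - sin (t 1) = -(r*cos (t 2))" using c2 by simp
      have e2: "cos (t 3) - cos (t 1) = r*sin (t 2)" using c2 by simp
      show ?thesis unfolding e1 e2 c1[THEN conjunct1] c1[THEN conjunct2]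
        by (simp add: algebra_simps power2_eq_square)
    qed
    also have "sin (t 3)*cos (t 2) - cos (t 3)*sin (t 2) = sin (t 3 - t 2)" by (simp add: sin_diff)
    also have "t 3 - t 2 = - (2*pi/3)" using t3 by simp
    also have "sin (- (2*pi/3)) = - (r/2)" by (simp add: sin_120 r_def)
    finally show ?thesis using a0 b0 r2 by (simp add: r_def)
  qed
  have Pne: "P j \<noteq> P k" if "j \<in> {1,2,3}" "k \<in> {1,2,3}" "j \<noteq> k" for j k
    using ncol that by (auto simp: collinear3_def)
  have Qne: "Q j \<noteq> Q k" if "j \<in> {1,2,3}" "k \<in> {1,2,3}" "j \<noteq> k" for j k
  proof
    assume h: "Q j = Q k"
    have cc: "c^2 \<noteq> 0" using assms(3) by simp
    have "cos (t j)^3 = cos (t k)^3" using h cc a0 by (simp add: assms(8))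
    then have 1: "cos (t j) = cos (t k)" by (rule cube_inj)
    have "sin (t j)^3 = sin (t k)^3" using h cc b0 by (simp add: assms(8))
    then have 2: "sin (t j) = sin (t k)" by (rule cube_inj)
    have "P j = P k" using 1 2 by (simp add: assms(7))
    then show False using Pne[OF that] by simp
  qed
  have HH: "on_perp H (P 1) (P 2) (P 3) \<and> on_perp H (P 2) (P 3) (P 1) \<and> on_perp H (P 3) (P 1) (P 2)"
    unfolding assms(9) by (rule orthoc[OF ncol])
  have HHc: "on_perp H (P i) (P j) (P k)" if "(i, j, k) \<in> {(1,2,3),(2,3,1),(3,1,2::nat)}" for i j k
    using HH that by auto
  have mem: "i \<in> {1,2,3} \<and> j \<in> {1,2,3} \<and> k \<in> {1,2,3} \<and> i \<noteq> j \<and> j \<noteq> k \<and> i \<noteq> k"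
    if "(i, j, k) \<in> {(1,2,3),(2,3,1),(3,1,2::nat)}" for i j k
    using that by auto
  have ALT: "dotp (vsub (Q i) (P i)) (vsub (P k) (P j)) = 0"
    if "(i, j, k) \<in> {(1,2,3),(2,3,1),(3,1,2::nat)}" for i j k
  proof -
    have e1: "cos (t k) - cos (t j) = -r * sin (t i)" and e2: "sin (t k) - sin (t j) = r * cos (t i)"
      using CYC[OF that] by blast+
    show ?thesis unfolding assms(7,8) by (rule coreA[OF a0 b0 assms(4) pyth e1 e2])
  qed
  have PQne: "P i \<noteq> Q i" for i
    using PQ_ne[OF pyth assms(2,1,4)] by (simp add: assms(7,8))
  have LINE: "on_line X (P i) (Q i) \<longleftrightarrow> on_perp X (P i) (P j) (P k)"
    if "(i, j, k) \<in> {(1,2,3),(2,3,1),(3,1,2::nat)}" for i j k X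
    using line_perp[OF PQne Pne ALT[OF that]] mem[OF that] by blast
  have part2: "\<forall>i j k. {i, j, k} = {1, 2, 3 :: nat} \<longrightarrow>
          P i \<noteq> Q i \<and> (\<forall>X. on_line X (P i) (Q i) \<longleftrightarrow> on_perp X (P i) (P j) (P k))"
  proof (intro allI impI)
    fix i j k :: nat assume h: "{i, j, k} = {1, 2, 3 :: nat}"
    show "P i \<noteq> Q i \<and> (\<forall>X. on_line X (P i) (Q i) \<longleftrightarrow> on_perp X (P i) (P j) (P k))"
    proof (rule perm3_reduce[where R="\<lambda>i j k. P i \<noteq> Q i \<and> (\<forall>X. on_line X (P i) (Q i) \<longleftrightarrow> on_perp X (P i) (P j) (P k))", OF _ _ h])
      fix i j k :: nat assume "(i, j, k) \<in> {(1,2,3),(2,3,1),(3,1,2::nat)}"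
      then show "P i \<noteq> Q i \<and> (\<forall>X. on_line X (P i) (Q i) \<longleftrightarrow> on_perp X (P i) (P j) (P k))"
        using PQne LINE by blast
    next
      fix i j k :: nat assume "P i \<noteq> Q i \<and> (\<forall>X. on_line X (P i) (Q i) \<longleftrightarrow> on_perp X (P i) (P j) (P k))"
      then show "P i \<noteq> Q i \<and> (\<forall>X. on_line X (P i) (Q i) \<longleftrightarrow> on_perp X (P i) (P k) (P j))"
        using on_perp_swap by blast
    qed
  qed
  have persp: "perspector (P 1) (P 2) (P 3) (Q 1) (Q 2) (Q 3) H"
    unfolding perspector_def using LINE[of 1 2 3] LINE[of 2 3 1] LINE[of 3 1 2] HH by simp
  have QH: "on_perp H (Q i) (P j) (P k)" if "(i, j, k) \<in> {(1,2,3),(2,3,1),(3,1,2::nat)}" for i j k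
  proof -
    have "dotp (vsub H (Q i)) (vsub (P k) (P j)) = dotp (vsub H (P i)) (vsub (P k) (P j)) - dotp (vsub (Q i) (P i)) (vsub (P k) (P j))"
      by (simp add: dotp_def vsub_def algebra_simps)
    then show ?thesis using HHc[OF that] ALT[OF that] unfolding on_perp_def by simp
  qed
  have part5: "\<forall>i j k. {i, j, k} = {1, 2, 3 :: nat} \<longrightarrow> on_perp H (Q i) (P j) (P k)"
  proof (intro allI impI)
    fix i j k :: nat assume h: "{i, j, k} = {1, 2, 3 :: nat}"
    show "on_perp H (Q i) (P j) (P k)"
      by (rule perm3_reduce[where R="\<lambda>i j k. on_perp H (Q i) (P j) (P k)", OF _ _ h])
         (erule QH, erule on_perp_swap[THEN iffD1])
  qed
  have MM: "on_perp (neg_pt M) (P i) (Q j) (Q k)" if "(i, j, k) \<in> {(1,2,3),(2,3,1),(3,1,2::nat)}" for i j k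
  proof -
    have e1: "cos (t k) - cos (t j) = -r * sin (t i)" and e2: "sin (t k) - sin (t j) = r * cos (t i)"
      and e3: "cos (t i) + cos (t j) + cos (t k) = 0" and e4: "sin (t i) + sin (t j) + sin (t k) = 0"
      and e5: "cos u = 4*cos (t i)^3 - 3*cos (t i)" and e6: "sin u = 4*sin (t i)^3 - 3*sin (t i)"
      using CYC[OF that] by blast+
    have "dotp (vsub (neg_pt M) (P i)) (vsub (Q k) (Q j)) = 0"
      unfolding assms(5,7,8) by (rule coreB[OF a0 b0 r2 pyth e1 e2 e3 e4 e5 e6])
    then show ?thesis using Qne mem[OF that] unfolding on_perp_def by auto
  qed
  have part6: "\<forall>i j k. {i, j, k} = {1, 2, 3 :: nat} \<longrightarrow> on_perp (neg_pt M) (P i) (Q j) (Q k)"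
  proof (intro allI impI)
    fix i j k :: nat assume h: "{i, j, k} = {1, 2, 3 :: nat}"
    show "on_perp (neg_pt M) (P i) (Q j) (Q k)"
      by (rule perm3_reduce[where R="\<lambda>i j k. on_perp (neg_pt M) (P i) (Q j) (Q k)", OF _ _ h])
         (erule MM, erule on_perp_swap[THEN iffD1])
  qed
  have oc1: "orthology_center (Q 1) (Q 2) (Q 3) (P 1) (P 2) (P 3) H"
    unfolding orthology_center_def using QH[of 1 2 3] QH[of 2 3 1] QH[of 3 1 2] by simp
  have oc2: "orthology_center (P 1) (P 2) (P 3) (Q 1) (Q 2) (Q 3) (neg_pt M)"
    unfolding orthology_center_def using MM[of 1 2 3] MM[of 2 3 1] MM[of 3 1 2] by simp
  have ol: "orthologic (P 1) (P 2) (P 3) (Q 1) (Q 2) (Q 3)"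
    unfolding orthologic_def using oc2 by blast
  from HH have h1: "on_perp H (P 1) (P 2) (P 3)" and h2: "on_perp H (P 2) (P 3) (P 1)"
    and h3: "on_perp H (P 3) (P 1) (P 2)" by auto
  show ?thesis by (intro conjI ncol part2 h1 h2 h3 persp part5 part6 ol oc1 oc2)
qed

end
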